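(* Let $\ell,m$ be positive integers and $\mu\in\mathcal{P}^{\ell,\ell+m-1}$, and let $\mu'=\tau_{\ell+m-1}(\mu)$. Then the following are equivalent: (1) for every $i\in[\ell]$, if $\tilde\mu(i)<i$ then $\tilde\mu(\tilde\mu(i))<i$; (2) for every $i\in[\ell]$, if $\widetilde{\mu'}(i)>i$ then $\widetilde{\mu'}(\widetilde{\mu'}(i))>i$.
   Context: For a positive integer $n$, $[n]=\{1,\dots,n\}$. $\mathcal{P}^{n,k}$ is the set of partitions $(\mu_1\geq\dots\geq\mu_n>0)$ with exactly $n$ parts and $\mu_1\leq k$, regarded as weakly decreasing functions $[n]\to[k]$, $\mu(i)=\mu_i$. The map $\tau_k:\mathcal{P}^{n,k}\to\mathcal{P}^{n,k}$ is $\tau_k(\mu_1,\dots,\mu_n)=(k+1-\mu_n,\dots,k+1-\mu_1)$. Define $t:[\ell]\times[\ell+m-1]\to[\ell]$ by $t(r,s)=s$ if $s<r$, $t(r,s)=r$ if $r\leq s\leq m+r-1$, $t(r,s)=s-m+1$ if $s>m+r-1$; for $\nu\in\mathcal{P}^{\ell,\ell+m-1}$, $\tilde\nu:[\ell]\to[\ell]$ is $\tilde\nu(i)=t(i,\nu(i))$. *)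

theory Defs
  imports Main
begin

text \<open>A partition in P^{n,k}, viewed as a weakly decreasing function [n] -> [k].
  Only the values on {1..n} matter.\<close>
definition partition_in :: "nat \<Rightarrow> nat \<Rightarrow> (nat \<Rightarrow> nat) \<Rightarrow> bool" where
  "partition_in n k \<mu> \<longleftrightarrow>
     (\<forall>i\<in>{1..n}. \<mu> i \<in> {1..k}) \<and>
     (\<forall>i\<in>{1..n}. \<forall>j\<in>{1..n}. i \<le> j \<longrightarrow> \<mu> j \<le> \<mu> i)"

definition tau :: "nat \<Rightarrow> nat \<Rightarrow> (nat \<Rightarrow> nat) \<Rightarrow> (nat \<Rightarrow> nat)" where
  "tau n k \<mu> = (\<lambda>i. k + 1 - \<mu> (n + 1 - i))"

definition tfun :: "nat \<Rightarrow> nat \<Rightarrow> nat \<Rightarrow> nat" where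
  "tfun m r s = (if s < r then s else if s \<le> m + r - 1 then r else s + 1 - m)"

definition tilde :: "nat \<Rightarrow> (nat \<Rightarrow> nat) \<Rightarrow> (nat \<Rightarrow> nat)" where
  "tilde m \<nu> = (\<lambda>i. tfun m i (\<nu> i))"

end

theory Submission
  imports Defs
begin

lemma tilde_range:
  assumes "1 \<le> j" "j \<le> l" "1 \<le> \<mu> j" "\<mu> j \<le> l + m - 1" "0 < m"
  shows "1 \<le> tilde m \<mu> j \<and> tilde m \<mu> j \<le> l"
  using assms unfolding tilde_def tfun_def by auto

lemma key:
  assumes "1 \<le> i" "i \<le> l" "1 \<le> \<mu> (l+1-i)" "\<mu> (l+1-i) \<le> l + m - 1" "0 < m"
  shows "tilde m (tau l (l + m - 1) \<mu>) i = l + 1 - tilde m \<mu> (l + 1 - i)"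
  using assms unfolding tilde_def tfun_def tau_def by (auto split: if_splits; arith)

theorem claim3p7:
  fixes l m :: nat and \<mu> :: "nat \<Rightarrow> nat"
  assumes "0 < l" and "0 < m"
    and "partition_in l (l + m - 1) \<mu>"
  shows "(\<forall>i\<in>{1..l}. tilde m \<mu> i < i \<longrightarrow> tilde m \<mu> (tilde m \<mu> i) < i)
     \<longleftrightarrow> (\<forall>i\<in>{1..l}. tilde m (tau l (l + m - 1) \<mu>) i > i \<longrightarrow>
            tilde m (tau l (l + m - 1) \<mu>) (tilde m (tau l (l + m - 1) \<mu>) i) > i)"
proof -
  have R: "\<And>j. j \<in> {1..l} \<Longrightarrow> tilde m \<mu> j \<in> {1..l}"
    using assms tilde_range[of _ l \<mu> m] unfolding partition_in_def by auto
  have K: "\<And>i. i \<in> {1..l} \<Longrightarrow> tilde m (tau l (l + m - 1) \<mu>) i = l + 1 - tilde m \<mu> (l + 1 - i)"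
  proof -
    fix i assume i: "i \<in> {1..l}"
    then have "l+1-i \<in> {1..l}" by auto
    then show "tilde m (tau l (l + m - 1) \<mu>) i = l + 1 - tilde m \<mu> (l + 1 - i)"
      using key[of i l \<mu> m] i assms unfolding partition_in_def by auto
  qed
  let ?t = "tilde m \<mu>" and ?s = "tilde m (tau l (l + m - 1) \<mu>)"
  have E: "(?s i > i \<longrightarrow> ?s (?s i) > i) \<longleftrightarrow>
     (?t (l+1-i) < l+1-i \<longrightarrow> ?t (?t (l+1-i)) < l+1-i)" if i: "i \<in> {1..l}" for i
  proof -
    have j: "l+1-i \<in> {1..l}" using i by auto
    have r1: "?t (l+1-i) \<in> {1..l}" using R j by blast
    have r2: "?t (?t (l+1-i)) \<in> {1..l}" using R r1 by blast
    have s1: "?s i = l+1 - ?t (l+1-i)" using K i by blast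
    have s1': "?s i \<in> {1..l}" using s1 r1 by auto
    have s2: "?s (?s i) = l+1 - ?t (l+1 - ?s i)" using K s1' by blast
    have "l+1 - ?s i = ?t (l+1-i)" using s1 r1 by auto
    then have s2': "?s (?s i) = l+1 - ?t (?t (l+1-i))" using s2 by simp
    define a where "a = ?t (l+1-i)"
    define b where "b = ?t (?t (l+1-i))"
    have "a \<in> {1..l}" "b \<in> {1..l}" using r1 r2 unfolding a_def b_def by auto
    moreover have "?s i = l+1-a" "?s (?s i) = l+1-b" using s1 s2' unfolding a_def b_def by auto
    moreover have "b = ?t a" unfolding a_def b_def by simp
    ultimately show ?thesis using i unfolding a_def[symmetric] by auto
  qed
  show ?thesis
  proof
    assume A: "\<forall>i\<in>{1..l}. ?t i < i \<longrightarrow> ?t (?t i) < i"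
    show "\<forall>i\<in>{1..l}. ?s i > i \<longrightarrow> ?s (?s i) > i"
    proof
      fix i assume i: "i \<in> {1..l}"
      have "l+1-i \<in> {1..l}" using i by auto
      then show "?s i > i \<longrightarrow> ?s (?s i) > i" using E[OF i] A by blast
    qed
  next
    assume A: "\<forall>i\<in>{1..l}. ?s i > i \<longrightarrow> ?s (?s i) > i"
    show "\<forall>i\<in>{1..l}. ?t i < i \<longrightarrow> ?t (?t i) < i"
    proof
      fix j assume j: "j \<in> {1..l}"
      define i where "i = l+1-j"
      have i: "i \<in> {1..l}" and ji: "j = l+1-i" using j unfolding i_def by auto
      show "?t j < j \<longrightarrow> ?t (?t j) < j" using E[OF i] A i unfolding ji by blast
    qed
  qed
qed

end
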